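(* Let $M$ be a metric space with $\#M\ge3$ and $s(M)>0$. For each pair $i,j\in M$ let a real number $a_{ij}=a_{ji}$ be given with $a_{ii}=0$ and $|a_{ij}|<s(M)$; define $\rho(i,j)=|ij|+a_{ij}$ and $a=\sup_{i,j}|a_{ij}|$. Assume $a\le t(M)/3$. Then: (1) $\rho$ is a metric on $M$; (2) the metric space $M_\rho=(M,\rho)$ satisfies $d_{GH}(M,M_\rho)\le a/2$; (3) if in addition $a/2<\min\{s(M)/4,e(M)/4\}$, then $d_{GH}(M,M_\rho)=a/2$; (4) under the assumptions of (3), if $a_{ij}\in\{a,-a\}$ for all $i\ne j$, then $M_\rho\in S_{a/2}(M)$; moreover, if $a'_{ij}=a'_{ji}\in\{a,-a\}$ ($i\ne j$), $a'_{ii}=0$, is another such family with $\rho'(i,j)=|ij|+a'_{ij}$, and $\rho_t=(1-t)\rho+t\rho'$ for $t\in[0,1]$, then each $(M,\rho_t)$ is a metric space, the map $t\mapsto M^t:=(M,\rho_t)$ is a continuous curve in $\mathcal{GH}$, and if $a_{ij}=a'_{ij}$ for at least one pair $i\ne j$, then $M^t\in S_{a/2}(M)$ for all $t\in[0,1]$.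
   Context: For a metric space $M$ with $\#M\ge3$: $s(M)=\inf\{|xx'|: x\ne x'\}$; $t(M)=\inf\{|xx'|+|x'x''|-|xx''|: x,x',x''\text{ pairwise distinct}\}$; $S(M)$ is the set of bijections $M\to M$ and $e(M)=\inf\{\operatorname{dis}f: f\in S(M), f\ne\mathrm{id}\}$, where $\operatorname{dis}f=\sup_{x,x'}||xx'|-|f(x)f(x')||$. $d_{GH}$ is the Gromov–Hausdorff distance: $d_{GH}(X,Y)=\frac12\inf\{\operatorname{dis}R\}$ over correspondences $R\subset X\times Y$ (relations with both projections surjective), $\operatorname{dis}R=\sup\{||xx'|-|yy'||:(x,y),(x',y')\in R\}$. $\mathcal{GH}$ is the class (NBG sense) of isometry classes of all metric spaces; for each cardinal $n$ the subclass $\mathcal{GH}_n$ of spaces of cardinality at most $n$ is a set with topology based on open $d_{GH}$-balls, and a map from a topological space into $\mathcal{GH}$ is continuous if it is continuous into some (equivalently, every) $\mathcal{GH}_n$ containing its image. $S_r(X)=\{Y\in\mathcal{GH}: d_{GH}(X,Y)=r\}$. *)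

theory Defs
  imports "HOL-Analysis.Analysis"
begin

definition metric_on :: "'a set \<Rightarrow> ('a \<Rightarrow> 'a \<Rightarrow> real) \<Rightarrow> bool" where
  "metric_on M d \<longleftrightarrow>
     (\<forall>x\<in>M. \<forall>y\<in>M. 0 \<le> d x y \<and> d x y = d y x \<and> (d x y = 0 \<longleftrightarrow> x = y)) \<and>
     (\<forall>x\<in>M. \<forall>y\<in>M. \<forall>z\<in>M. d x z \<le> d x y + d y z)"

definition s_inv :: "'a set \<Rightarrow> ('a \<Rightarrow> 'a \<Rightarrow> real) \<Rightarrow> real" where
  "s_inv M d = Inf {d x y | x y. x \<in> M \<and> y \<in> M \<and> x \<noteq> y}"

definition t_inv :: "'a set \<Rightarrow> ('a \<Rightarrow> 'a \<Rightarrow> real) \<Rightarrow> real" where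
  "t_inv M d = Inf {d x y + d y z - d x z | x y z.
      x \<in> M \<and> y \<in> M \<and> z \<in> M \<and> x \<noteq> y \<and> y \<noteq> z \<and> x \<noteq> z}"

text \<open>Distortion of a map (may be infinite, hence extended reals).\<close>
definition dis_map :: "'a set \<Rightarrow> ('a \<Rightarrow> 'a \<Rightarrow> real) \<Rightarrow> ('a \<Rightarrow> 'a) \<Rightarrow> ereal" where
  "dis_map M d f = (SUP x\<in>M. SUP y\<in>M. ereal \<bar>d x y - d (f x) (f y)\<bar>)"

definition e_inv :: "'a set \<Rightarrow> ('a \<Rightarrow> 'a \<Rightarrow> real) \<Rightarrow> ereal" where
  "e_inv M d = (INF f\<in>{f. bij_betw f M M \<and> (\<exists>x\<in>M. f x \<noteq> x)}. dis_map M d f)"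

definition correspondence :: "'a set \<Rightarrow> 'b set \<Rightarrow> ('a \<times> 'b) set \<Rightarrow> bool" where
  "correspondence X Y R \<longleftrightarrow> R \<subseteq> X \<times> Y \<and> fst ` R = X \<and> snd ` R = Y"

definition dis_rel :: "('a \<Rightarrow> 'a \<Rightarrow> real) \<Rightarrow> ('b \<Rightarrow> 'b \<Rightarrow> real) \<Rightarrow> ('a \<times> 'b) set \<Rightarrow> ereal" where
  "dis_rel dX dY R = (SUP p\<in>R. SUP q\<in>R. ereal \<bar>dX (fst p) (fst q) - dY (snd p) (snd q)\<bar>)"

definition GH_dist :: "'a set \<Rightarrow> ('a \<Rightarrow> 'a \<Rightarrow> real) \<Rightarrow> 'b set \<Rightarrow> ('b \<Rightarrow> 'b \<Rightarrow> real) \<Rightarrow> ereal" where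
  "GH_dist X dX Y dY = (INF R\<in>{R. correspondence X Y R}. dis_rel dX dY R) / 2"

text \<open>Continuity of a curve [0,1] -> GH of metric spaces on a common carrier, w.r.t. the
  topology generated by open GH-balls (equivalently, epsilon-delta in d_GH).\<close>
definition GH_continuous_curve :: "'a set \<Rightarrow> (real \<Rightarrow> 'a \<Rightarrow> 'a \<Rightarrow> real) \<Rightarrow> bool" where
  "GH_continuous_curve M r \<longleftrightarrow>
     (\<forall>t0\<in>{0..1}. \<forall>\<epsilon>>0. \<exists>\<delta>>0. \<forall>t\<in>{0..1}. \<bar>t - t0\<bar> < \<delta> \<longrightarrow>
        GH_dist M (r t) M (r t0) < ereal \<epsilon>)"

end

theory Submission
  imports Defs
begin
lemma s_le:
  assumes "metric_on M d" "x \<in> M" "y \<in> M" "x \<noteq> y"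
  shows "s_inv M d \<le> d x y"
  unfolding s_inv_def
proof (rule cInf_lower)
  show "d x y \<in> {d x y |x y. x \<in> M \<and> y \<in> M \<and> x \<noteq> y}" using assms by blast
  show "bdd_below {d x y |x y. x \<in> M \<and> y \<in> M \<and> x \<noteq> y}"
    using assms(1) unfolding metric_on_def bdd_below_def by (intro exI[of _ 0]) auto
qed

lemma t_le:
  assumes "metric_on M d" "x \<in> M" "y \<in> M" "z \<in> M" "x \<noteq> y" "y \<noteq> z" "x \<noteq> z"
  shows "t_inv M d \<le> d x y + d y z - d x z"
  unfolding t_inv_def
proof (rule cInf_lower)
  show "d x y + d y z - d x z \<in> {d x y + d y z - d x z |x y z.
      x \<in> M \<and> y \<in> M \<and> z \<in> M \<and> x \<noteq> y \<and> y \<noteq> z \<and> x \<noteq> z}" using assms by blast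
  show "bdd_below {d x y + d y z - d x z |x y z.
      x \<in> M \<and> y \<in> M \<and> z \<in> M \<and> x \<noteq> y \<and> y \<noteq> z \<and> x \<noteq> z}"
    using assms(1) unfolding metric_on_def bdd_below_def
    by (intro exI[of _ 0]) (auto simp: diff_ge_0_iff_ge)
qed

lemma metric_pert:
  assumes m: "metric_on M d"
    and sym: "\<forall>i\<in>M. \<forall>j\<in>M. B i j = B j i"
    and diag: "\<forall>i\<in>M. B i i = 0"
    and small: "\<forall>i\<in>M. \<forall>j\<in>M. i \<noteq> j \<longrightarrow> \<bar>B i j\<bar> < s_inv M d"
    and bnd: "\<forall>i\<in>M. \<forall>j\<in>M. \<bar>B i j\<bar> \<le> b"
    and bt: "3 * b \<le> t_inv M d"
  shows "metric_on M (\<lambda>i j. d i j + B i j)"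
proof -
  have d: "\<forall>x\<in>M. \<forall>y\<in>M. 0 \<le> d x y \<and> d x y = d y x \<and> (d x y = 0 \<longleftrightarrow> x = y)"
    and tri: "\<forall>x\<in>M. \<forall>y\<in>M. \<forall>z\<in>M. d x z \<le> d x y + d y z"
    using m unfolding metric_on_def by auto
  have pos: "0 < d x y + B x y" if "x \<in> M" "y \<in> M" "x \<noteq> y" for x y
  proof -
    have "s_inv M d \<le> d x y" by (rule s_le[OF m that])
    moreover have "\<bar>B x y\<bar> < s_inv M d" using small that by blast
    ultimately show ?thesis by linarith
  qed
  have zero: "d x x + B x x = 0" if "x \<in> M" for x
  proof -
    have "d x x = 0" using d that by blast
    moreover have "B x x = 0" using diag that by blast
    ultimately show ?thesis by simp
  qed
  have nn: "0 \<le> d x y + B x y" if "x \<in> M" "y \<in> M" for x y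
  proof (cases "x = y")
    case True then show ?thesis using zero[OF that(1)] by simp
  next
    case False then show ?thesis using pos[OF that False] by simp
  qed
  show ?thesis unfolding metric_on_def
  proof (intro conjI ballI)
    fix x y assume xy: "x \<in> M" "y \<in> M"
    show "0 \<le> d x y + B x y" by (rule nn[OF xy])
    have "d x y = d y x" using d xy by blast
    moreover have "B x y = B y x" using sym xy by blast
    ultimately show "d x y + B x y = d y x + B y x" by simp
    show "(d x y + B x y = 0) = (x = y)"
    proof
      assume "d x y + B x y = 0" then show "x = y" using pos[OF xy] by fastforce
    next
      assume "x = y" then show "d x y + B x y = 0" using zero[OF xy(1)] by simp
    qed
  next
    fix x y z assume xyz: "x \<in> M" "y \<in> M" "z \<in> M"
    show "d x z + B x z \<le> d x y + B x y + (d y z + B y z)"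
    proof (cases "x = y \<or> y = z \<or> x = z")
      case True
      have n1: "0 \<le> d x y + B x y" "0 \<le> d y z + B y z" using nn xyz by auto
      consider "x = y" | "y = z" | "x = z" using True by blast
      then show ?thesis
      proof cases
        case 1 then show ?thesis using zero[OF xyz(1)] by simp
      next
        case 2 then show ?thesis using zero[OF xyz(2)] by simp
      next
        case 3 then show ?thesis using zero[OF xyz(1)] n1 by simp
      qed
    next
      case False
      then have "t_inv M d \<le> d x y + d y z - d x z" using t_le[OF m xyz] by blast
      moreover have "\<bar>B x y\<bar> \<le> b" "\<bar>B y z\<bar> \<le> b" "\<bar>B x z\<bar> \<le> b" using bnd xyz by auto
      ultimately show ?thesis using bt by linarith
    qed
  qed
qed

lemma ereal_half_le:
  assumes "X \<le> ereal c" shows "X / 2 \<le> ereal (c / 2)"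
  using assms by (cases X) auto

lemma ereal_half_ge:
  assumes "ereal c \<le> X" shows "ereal (c / 2) \<le> X / 2"
  using assms by (cases X) auto

lemma GH_upper:
  assumes "\<forall>x\<in>M. \<forall>y\<in>M. \<bar>d1 x y - d2 x y\<bar> \<le> c"
  shows "GH_dist M d1 M d2 \<le> ereal (c / 2)"
proof -
  let ?R = "{(x, x) | x. x \<in> M}"
  have corr: "correspondence M M ?R" unfolding correspondence_def by (auto simp: image_def)
  have "dis_rel d1 d2 ?R \<le> ereal c" unfolding dis_rel_def
    using assms by (auto intro!: SUP_least)
  then have "(INF R\<in>{R. correspondence M M R}. dis_rel d1 d2 R) \<le> ereal c"
    using corr by (meson INF_lower2 mem_Collect_eq)
  then show ?thesis unfolding GH_dist_def by (rule ereal_half_le)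
qed

lemma GH_lower:
  assumes m: "metric_on M d"
    and sle: "\<forall>x\<in>M. \<forall>y\<in>M. x \<noteq> y \<longrightarrow> s \<le> d x y"
    and bs: "2 * b < s"
    and be: "ereal (2 * b) < e_inv M d"
    and bnd: "\<forall>i\<in>M. \<forall>j\<in>M. \<bar>B i j\<bar> \<le> b"
    and least: "\<forall>c. (\<forall>i\<in>M. \<forall>j\<in>M. \<bar>B i j\<bar> \<le> c) \<longrightarrow> b \<le> c"
  shows "ereal (b / 2) \<le> GH_dist M d M (\<lambda>i j. d i j + B i j)"
proof -
  have dd: "\<forall>x\<in>M. \<forall>y\<in>M. 0 \<le> d x y \<and> d x y = d y x \<and> (d x y = 0 \<longleftrightarrow> x = y)"
    using m unfolding metric_on_def by auto
  have Mne: "M \<noteq> {}" using least[rule_format, of "b - 1"] by auto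
  have key: "ereal b \<le> dis_rel d (\<lambda>i j. d i j + B i j) R" if corr: "correspondence M M R" for R
  proof (rule ccontr)
    let ?D = "dis_rel d (\<lambda>i j. d i j + B i j) R"
    assume "\<not> ereal b \<le> ?D"
    then have Dlt: "?D < ereal b" by auto
    have RM: "R \<subseteq> M \<times> M" and fR: "fst ` R = M" and sR: "snd ` R = M"
      using corr unfolding correspondence_def by auto
    have le: "ereal \<bar>d (fst p) (fst q) - (d (snd p) (snd q) + B (snd p) (snd q))\<bar> \<le> ?D"
      if "p \<in> R" "q \<in> R" for p q
      unfolding dis_rel_def by (rule order_trans[OF _ SUP_upper[OF that(1)]]) (rule order_trans[OF _ SUP_upper[OF that(2)]], simp)
    obtain x0 where "x0 \<in> M" using Mne by auto
    then obtain p0 where p0: "p0 \<in> R" using fR by auto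
    have "?D \<noteq> -\<infinity>" using le[OF p0 p0] by auto
    then obtain \<delta> where D: "?D = ereal \<delta>" using Dlt by (cases ?D) auto
    have dl: "\<delta> < b" using Dlt D by auto
    have le2: "\<bar>d x x' - (d y y' + B y y')\<bar> \<le> \<delta>" if "(x,y) \<in> R" "(x',y') \<in> R" for x y x' y'
      using le[OF that] D by auto
    have func: "y = y'" if "(x,y) \<in> R" "(x,y') \<in> R" for x y y'
    proof (rule ccontr)
      assume ne: "y \<noteq> y'"
      have "y \<in> M" "y' \<in> M" "x \<in> M" using that RM by auto
      then have "s \<le> d y y'" "\<bar>B y y'\<bar> \<le> b" "d x x = 0" using sle ne bnd dd by auto
      moreover have "\<bar>d x x - (d y y' + B y y')\<bar> \<le> \<delta>" using le2[OF that] .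
      ultimately show False using bs dl by linarith
    qed
    have injR: "x = x'" if "(x,y) \<in> R" "(x',y) \<in> R" for x x' y
    proof (rule ccontr)
      assume ne: "x \<noteq> x'"
      have "y \<in> M" "x' \<in> M" "x \<in> M" using that RM by auto
      then have "s \<le> d x x'" "B y y = 0 \<or> True" "d y y = 0" using sle ne bnd dd by auto
      moreover have "\<bar>B y y\<bar> \<le> b" using \<open>y \<in> M\<close> bnd by auto
      moreover have "\<bar>d x x' - (d y y + B y y)\<bar> \<le> \<delta>" using le2[OF that] .
      ultimately show False using bs dl bnd by linarith
    qed
    have ex: "\<exists>y. (x,y) \<in> R" if "x \<in> M" for x using fR that by force
    define f where "f x = (SOME y. (x,y) \<in> R)" for x
    have fR': "(x, f x) \<in> R" if "x \<in> M" for x unfolding f_def using ex[OF that] by (rule someI_ex)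
    have fy: "f x = y" if "(x,y) \<in> R" for x y
      using func[OF fR' that] that RM by auto
    show False
    proof (cases "\<forall>x\<in>M. f x = x")
      case True
      have "\<forall>i\<in>M. \<forall>j\<in>M. \<bar>B i j\<bar> \<le> \<delta>"
      proof (intro ballI)
        fix i j assume ij: "i \<in> M" "j \<in> M"
        have "(i,i) \<in> R" "(j,j) \<in> R" using fR' True ij by metis+
        from le2[OF this] show "\<bar>B i j\<bar> \<le> \<delta>" by simp
      qed
      then have "b \<le> \<delta>" using least by blast
      then show False using dl by simp
    next
      case False
      then obtain x1 where x1: "x1 \<in> M" "f x1 \<noteq> x1" by auto
      have bij: "bij_betw f M M"
      proof (rule bij_betw_imageI)
        show "inj_on f M" unfolding inj_on_def using fR' injR by metis
        show "f ` M = M"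
        proof
          show "f ` M \<subseteq> M" using fR' RM by auto
          show "M \<subseteq> f ` M"
          proof
            fix y assume "y \<in> M"
            then obtain p where "p \<in> R" "snd p = y" using sR by force
            then obtain x where "(x,y) \<in> R" by (cases p) auto
            then show "y \<in> f ` M" using fy RM by force
          qed
        qed
      qed
      have "e_inv M d \<le> dis_map M d f"
        unfolding e_inv_def using bij x1 by (auto intro!: INF_lower)
      moreover have "dis_map M d f \<le> ereal (\<delta> + b)"
        unfolding dis_map_def
      proof (intro SUP_least)
        fix x x' assume xx: "x \<in> M" "x' \<in> M"
        have "\<bar>d x x' - (d (f x) (f x') + B (f x) (f x'))\<bar> \<le> \<delta>" using le2[OF fR'[OF xx(1)] fR'[OF xx(2)]] .
        moreover have "\<bar>B (f x) (f x')\<bar> \<le> b" using bnd fR' RM xx by blast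
        ultimately show "ereal \<bar>d x x' - d (f x) (f x')\<bar> \<le> ereal (\<delta> + b)" by simp
      qed
      ultimately have "ereal (2*b) < ereal (\<delta> + b)" using be by (meson order.strict_trans2 order.trans)
      then show False using dl by simp
    qed
  qed
  have "ereal b \<le> (INF R\<in>{R. correspondence M M R}. dis_rel d (\<lambda>i j. d i j + B i j) R)"
    using key by (auto intro!: INF_greatest)
  then show ?thesis unfolding GH_dist_def by (rule ereal_half_ge)
qed

lemma conv_bound:
  fixes t x y a :: real
  assumes "0 \<le> t" "t \<le> 1" "\<bar>x\<bar> \<le> a" "\<bar>y\<bar> \<le> a"
  shows "\<bar>(1 - t) * x + t * y\<bar> \<le> a"
proof -
  have "\<bar>(1 - t) * x + t * y\<bar> \<le> \<bar>(1 - t) * x\<bar> + \<bar>t * y\<bar>" by (rule abs_triangle_ineq)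
  also have "\<dots> = (1 - t) * \<bar>x\<bar> + t * \<bar>y\<bar>" using assms by (simp add: abs_mult)
  also have "\<dots> \<le> (1 - t) * a + t * a"
    using assms by (intro add_mono mult_left_mono) auto
  finally show ?thesis by (simp add: algebra_simps)
qed

theorem lemma10:
  fixes M :: "'a set" and d :: "'a \<Rightarrow> 'a \<Rightarrow> real" and A :: "'a \<Rightarrow> 'a \<Rightarrow> real"
  assumes metric: "metric_on M d"
    and three: "\<exists>x y z. x \<in> M \<and> y \<in> M \<and> z \<in> M \<and> x \<noteq> y \<and> y \<noteq> z \<and> x \<noteq> z"
    and s_pos: "s_inv M d > 0"
    and A_sym: "\<forall>i\<in>M. \<forall>j\<in>M. A i j = A j i"
    and A_diag: "\<forall>i\<in>M. A i i = 0"
    and A_small: "\<forall>i\<in>M. \<forall>j\<in>M. \<bar>A i j\<bar> < s_inv M d"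
    and a_le: "Sup {\<bar>A i j\<bar> | i j. i \<in> M \<and> j \<in> M} \<le> t_inv M d / 3"
  defines "a \<equiv> Sup {\<bar>A i j\<bar> | i j. i \<in> M \<and> j \<in> M}"
    and "\<rho> \<equiv> (\<lambda>i j. d i j + A i j)"
  shows
    "metric_on M \<rho>
     \<and> GH_dist M d M \<rho> \<le> ereal (a / 2)
     \<and> (a / 2 < s_inv M d / 4 \<and> ereal (a / 2) < e_inv M d / 4 \<longrightarrow>
          GH_dist M d M \<rho> = ereal (a / 2))
     \<and> (a / 2 < s_inv M d / 4 \<and> ereal (a / 2) < e_inv M d / 4 \<and>
        (\<forall>i\<in>M. \<forall>j\<in>M. i \<noteq> j \<longrightarrow> A i j = a \<or> A i j = - a) \<longrightarrow>
          GH_dist M d M \<rho> = ereal (a / 2)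
          \<and> (\<forall>A' :: 'a \<Rightarrow> 'a \<Rightarrow> real.
               (\<forall>i\<in>M. \<forall>j\<in>M. A' i j = A' j i) \<and> (\<forall>i\<in>M. A' i i = 0) \<and>
               (\<forall>i\<in>M. \<forall>j\<in>M. i \<noteq> j \<longrightarrow> A' i j = a \<or> A' i j = - a) \<longrightarrow>
               (let \<rho>' = (\<lambda>i j. d i j + A' i j);
                    \<rho>t = (\<lambda>t i j. (1 - t) * \<rho> i j + t * \<rho>' i j)
                in (\<forall>t\<in>{0..1}. metric_on M (\<rho>t t))
                   \<and> GH_continuous_curve M \<rho>t
                   \<and> ((\<exists>i\<in>M. \<exists>j\<in>M. i \<noteq> j \<and> A i j = A' i j) \<longrightarrow>
                        (\<forall>t\<in>{0..1}. GH_dist M d M (\<rho>t t) = ereal (a / 2))))))"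
proof -
  have dd: "\<forall>x\<in>M. \<forall>y\<in>M. 0 \<le> d x y \<and> d x y = d y x \<and> (d x y = 0 \<longleftrightarrow> x = y)"
    using metric unfolding metric_on_def by auto
  let ?S = "{\<bar>A i j\<bar> | i j. i \<in> M \<and> j \<in> M}"
  obtain x0 where x0: "x0 \<in> M" using three by auto
  have Sne: "?S \<noteq> {}" using x0 by blast
  have Sbdd: "bdd_above ?S" unfolding bdd_above_def using A_small
    by (intro exI[of _ "s_inv M d"]) (auto intro: less_imp_le)
  have aup: "\<forall>i\<in>M. \<forall>j\<in>M. \<bar>A i j\<bar> \<le> a"
    unfolding a_def using Sbdd by (auto intro!: cSup_upper)
  have aleast: "\<forall>c. (\<forall>i\<in>M. \<forall>j\<in>M. \<bar>A i j\<bar> \<le> c) \<longrightarrow> a \<le> c"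
    unfolding a_def
  proof (intro allI impI cSup_least[OF Sne])
    fix c x assume "\<forall>i\<in>M. \<forall>j\<in>M. \<bar>A i j\<bar> \<le> c" "x \<in> ?S"
    then show "x \<le> c" by blast
  qed
  have a0: "0 \<le> a" using aup x0 A_diag by fastforce
  have sle: "\<forall>x\<in>M. \<forall>y\<in>M. x \<noteq> y \<longrightarrow> s_inv M d \<le> d x y"
    using s_le[OF metric] by blast
  have P1: "metric_on M \<rho>" unfolding \<rho>_def
    using metric_pert[OF metric A_sym A_diag _ aup] A_small a_le a_def by auto
  have P2: "GH_dist M d M \<rho> \<le> ereal (a / 2)" unfolding \<rho>_def
    using aup by (intro GH_upper) auto
  have P3: "GH_dist M d M \<rho> = ereal (a / 2)"
    if H: "a / 2 < s_inv M d / 4" "ereal (a / 2) < e_inv M d / 4"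
  proof -
    have e: "ereal (2 * a) < e_inv M d" using H(2) by (cases "e_inv M d") auto
    have "ereal (a / 2) \<le> GH_dist M d M \<rho>" unfolding \<rho>_def
      by (rule GH_lower[OF metric sle _ e aup aleast]) (use H(1) in auto)
    then show ?thesis using P2 by auto
  qed
  show ?thesis
  proof (intro conjI impI)
    show "metric_on M \<rho>" by (rule P1)
    show "GH_dist M d M \<rho> \<le> ereal (a / 2)" by (rule P2)
    show "GH_dist M d M \<rho> = ereal (a / 2)"
      if "a / 2 < s_inv M d / 4 \<and> ereal (a / 2) < e_inv M d / 4" using that P3 by auto
    show "GH_dist M d M \<rho> = ereal (a / 2)"
      if "a / 2 < s_inv M d / 4 \<and> ereal (a / 2) < e_inv M d / 4 \<and>
        (\<forall>i\<in>M. \<forall>j\<in>M. i \<noteq> j \<longrightarrow> A i j = a \<or> A i j = - a)" using that P3 by auto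
  next
    assume H: "a / 2 < s_inv M d / 4 \<and> ereal (a / 2) < e_inv M d / 4 \<and>
        (\<forall>i\<in>M. \<forall>j\<in>M. i \<noteq> j \<longrightarrow> A i j = a \<or> A i j = - a)"
    have e: "ereal (2 * a) < e_inv M d" using H by (cases "e_inv M d") auto
    have as: "2 * a < s_inv M d" using H by auto
    show "\<forall>A' :: 'a \<Rightarrow> 'a \<Rightarrow> real.
               (\<forall>i\<in>M. \<forall>j\<in>M. A' i j = A' j i) \<and> (\<forall>i\<in>M. A' i i = 0) \<and>
               (\<forall>i\<in>M. \<forall>j\<in>M. i \<noteq> j \<longrightarrow> A' i j = a \<or> A' i j = - a) \<longrightarrow>
               (let \<rho>' = (\<lambda>i j. d i j + A' i j);
                    \<rho>t = (\<lambda>t i j. (1 - t) * \<rho> i j + t * \<rho>' i j)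
                in (\<forall>t\<in>{0..1}. metric_on M (\<rho>t t))
                   \<and> GH_continuous_curve M \<rho>t
                   \<and> ((\<exists>i\<in>M. \<exists>j\<in>M. i \<noteq> j \<and> A i j = A' i j) \<longrightarrow>
                        (\<forall>t\<in>{0..1}. GH_dist M d M (\<rho>t t) = ereal (a / 2))))"
    proof (intro allI impI)
      fix A' :: "'a \<Rightarrow> 'a \<Rightarrow> real"
      assume HA: "(\<forall>i\<in>M. \<forall>j\<in>M. A' i j = A' j i) \<and> (\<forall>i\<in>M. A' i i = 0) \<and>
               (\<forall>i\<in>M. \<forall>j\<in>M. i \<noteq> j \<longrightarrow> A' i j = a \<or> A' i j = - a)"
      define B where "B t i j = (1 - t) * A i j + t * A' i j" for t :: real and i j
      define R where "R = (\<lambda>t i j. (1 - t) * \<rho> i j + t * (d i j + A' i j))"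
      have Req: "R t = (\<lambda>i j. d i j + B t i j)" for t
        unfolding R_def B_def \<rho>_def by (auto simp: algebra_simps)
      have A'up: "\<bar>A' i j\<bar> \<le> a" if "i \<in> M" "j \<in> M" for i j
      proof -
        have "i = j \<or> A' i j = a \<or> A' i j = - a" using HA that by blast
        then show ?thesis using HA that a0 by auto
      qed
      have Bup: "\<forall>i\<in>M. \<forall>j\<in>M. \<bar>B t i j\<bar> \<le> a" if "t \<in> {0..1}" for t
        unfolding B_def using that aup A'up by (auto intro!: conv_bound)
      have Bsym: "\<forall>i\<in>M. \<forall>j\<in>M. B t i j = B t j i" for t
        unfolding B_def using A_sym HA by auto
      have Bdiag: "\<forall>i\<in>M. B t i i = 0" for t
        unfolding B_def using A_diag HA by auto
      have Q1: "\<forall>t\<in>{0..1}. metric_on M (R t)"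
      proof
        fix t :: real assume t: "t \<in> {0..1}"
        show "metric_on M (R t)" unfolding Req
        proof (rule metric_pert[OF metric Bsym Bdiag _ Bup[OF t]])
          show "\<forall>i\<in>M. \<forall>j\<in>M. i \<noteq> j \<longrightarrow> \<bar>B t i j\<bar> < s_inv M d"
            using Bup[OF t] as a0 by force
          show "3 * a \<le> t_inv M d" using a_le a_def by simp
        qed
      qed
      have Q2: "GH_continuous_curve M R"
        unfolding GH_continuous_curve_def
      proof (intro ballI allI impI)
        fix t0 :: real and \<epsilon> :: real
        assume t0: "t0 \<in> {0..1}" and ep: "\<epsilon> > 0"
        show "\<exists>\<delta>>0. \<forall>t\<in>{0..1}. \<bar>t - t0\<bar> < \<delta> \<longrightarrow> GH_dist M (R t) M (R t0) < ereal \<epsilon>"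
        proof (intro exI[of _ "\<epsilon> / (a + 1)"] conjI ballI impI)
          show "0 < \<epsilon> / (a + 1)" using ep a0 by auto
          fix t :: real assume t: "t \<in> {0..1}" and tt: "\<bar>t - t0\<bar> < \<epsilon> / (a + 1)"
          have "GH_dist M (R t) M (R t0) \<le> ereal (\<bar>t - t0\<bar> * (2 * a) / 2)"
          proof (rule GH_upper, intro ballI)
            fix x y assume xy: "x \<in> M" "y \<in> M"
            have "R t x y - R t0 x y = (t - t0) * (A' x y - A x y)"
              unfolding Req B_def by (simp add: algebra_simps)
            moreover have "\<bar>A' x y - A x y\<bar> \<le> 2 * a" using A'up[OF xy] aup xy by force
            ultimately show "\<bar>R t x y - R t0 x y\<bar> \<le> \<bar>t - t0\<bar> * (2 * a)"
              by (simp add: abs_mult mult_left_mono)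
          qed
          moreover have "\<bar>t - t0\<bar> * a \<le> \<epsilon> / (a + 1) * a"
            using tt a0 by (intro mult_right_mono) auto
          moreover have "\<epsilon> / (a + 1) * a < \<epsilon>"
            using ep a0 by (simp add: field_simps)
          ultimately show "GH_dist M (R t) M (R t0) < ereal \<epsilon>"
          proof -
            assume g: "GH_dist M (R t) M (R t0) \<le> ereal (\<bar>t - t0\<bar> * (2 * a) / 2)"
              and h1: "\<bar>t - t0\<bar> * a \<le> \<epsilon> / (a + 1) * a" and h2: "\<epsilon> / (a + 1) * a < \<epsilon>"
            have "\<bar>t - t0\<bar> * (2 * a) / 2 < \<epsilon>" using h1 h2 by simp
            then have "ereal (\<bar>t - t0\<bar> * (2 * a) / 2) < ereal \<epsilon>" by simp
            with g show ?thesis by (rule order.strict_trans1)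
          qed
        qed
      qed
      have Q3: "\<forall>t\<in>{0..1}. GH_dist M d M (R t) = ereal (a / 2)"
        if ex: "\<exists>i\<in>M. \<exists>j\<in>M. i \<noteq> j \<and> A i j = A' i j"
      proof
        fix t :: real assume t: "t \<in> {0..1}"
        obtain i0 j0 where ij: "i0 \<in> M" "j0 \<in> M" "i0 \<noteq> j0" "A i0 j0 = A' i0 j0" using ex by blast
        have "B t i0 j0 = A i0 j0" unfolding B_def using ij by (simp add: algebra_simps)
        moreover have "\<bar>A i0 j0\<bar> = a"
        proof -
          have "A i0 j0 = a \<or> A i0 j0 = - a" using H ij by blast
          then show ?thesis using a0 by auto
        qed
        ultimately have Bij: "\<bar>B t i0 j0\<bar> = a" by simp
        have least: "\<forall>c. (\<forall>i\<in>M. \<forall>j\<in>M. \<bar>B t i j\<bar> \<le> c) \<longrightarrow> a \<le> c"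
        proof (intro allI impI)
          fix c assume "\<forall>i\<in>M. \<forall>j\<in>M. \<bar>B t i j\<bar> \<le> c"
          then have "\<bar>B t i0 j0\<bar> \<le> c" using ij by blast
          then show "a \<le> c" using Bij by simp
        qed
        have "ereal (a / 2) \<le> GH_dist M d M (R t)" unfolding Req
          by (rule GH_lower[OF metric sle as e Bup[OF t] least])
        moreover have "GH_dist M d M (R t) \<le> ereal (a / 2)" unfolding Req
          using Bup[OF t] by (intro GH_upper) auto
        ultimately show "GH_dist M d M (R t) = ereal (a / 2)" by auto
      qed
      show "let \<rho>' = (\<lambda>i j. d i j + A' i j);
                    \<rho>t = (\<lambda>t i j. (1 - t) * \<rho> i j + t * \<rho>' i j)
                in (\<forall>t\<in>{0..1}. metric_on M (\<rho>t t))
                   \<and> GH_continuous_curve M \<rho>t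
                   \<and> ((\<exists>i\<in>M. \<exists>j\<in>M. i \<noteq> j \<and> A i j = A' i j) \<longrightarrow>
                        (\<forall>t\<in>{0..1}. GH_dist M d M (\<rho>t t) = ereal (a / 2)))"
        unfolding Let_def
      proof (intro conjI impI)
        show "\<forall>t\<in>{0..1}. metric_on M (\<lambda>i j. (1 - t) * \<rho> i j + t * (d i j + A' i j))"
          using Q1 unfolding R_def by simp
        show "GH_continuous_curve M (\<lambda>t i j. (1 - t) * \<rho> i j + t * (d i j + A' i j))"
          using Q2 unfolding R_def by simp
        assume "\<exists>i\<in>M. \<exists>j\<in>M. i \<noteq> j \<and> A i j = A' i j"
        from Q3[OF this] show "\<forall>t\<in>{0..1}. GH_dist M d M (\<lambda>i j. (1 - t) * \<rho> i j + t * (d i j + A' i j)) = ereal (a / 2)"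
          unfolding R_def by simp
      qed
    qed
  qed
qed

end
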